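(* For every $\lambda>\lambda^*$, $\dfrac{G(e(\lambda))}{\lambda}<\dfrac{1}{a^*}$, where $a^*=\max_{1\le i\le p}a_i$.
   Context: Standing setup. Let $\gamma>0$; let $a_1,\dots,a_p>0$ with weights $\omega_i>0$, $\sum_i\omega_i=1$, and $b_1,\dots,b_n>0$ with weights $\pi_j>0$, $\sum_j\pi_j=1$. Let $\mu$ be the limiting spectral distribution of $\mathbf{N}\mathbf{N}^T$ where $\mathbf{N}=\mathbf{A}^{1/2}\mathbf{G}\mathbf{B}^{1/2}$ is $k\times l$, $\mathbf{G}$ has iid mean-zero entries of variance $1/l$, $k/l\to\gamma$, and the spectral distributions of $\mathbf{A},\mathbf{B}$ converge to $\nu=\sum_i\omega_i\delta_{a_i}$ and $\underline{\nu}=\sum_j\pi_j\delta_{b_j}$. $\mu$ is a compactly supported probability measure on $[0,\infty)$; $\lambda^*>0$ is the right endpoint of its support, and $s(\lambda)=\int\frac{d\mu(t)}{t-\lambda}$ for $\lambda>\lambda^*$. Define $G(e)=\sum_{j=1}^n\frac{b_j\pi_j}{1+\gamma b_j e}$. It is known (master equations) that there is a continuous (indeed smooth) real function $e(\lambda)$ on $(\lambda^*,\infty)$, never equal to a pole $-1/(\gamma b_j)$ of $G$ and with $a_iG(e(\lambda))\ne\lambda$ for all $i$, satisfying $s(\lambda)=\sum_{i=1}^p\frac{\omega_i}{a_iG(e(\lambda))-\lambda}$ and $e(\lambda)=\sum_{i=1}^p\frac{a_i\omega_i}{a_iG(e(\lambda))-\lambda}$. *)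

theory Defs
  imports "HOL-Probability.Probability"
begin

definition Gfun :: "real \<Rightarrow> (nat \<Rightarrow> real) \<Rightarrow> (nat \<Rightarrow> real) \<Rightarrow> nat \<Rightarrow> real \<Rightarrow> real" where
  "Gfun \<gamma> b \<pi> n e = (\<Sum>j=1..n. b j * \<pi> j / (1 + \<gamma> * b j * e))"

definition measure_support :: "real measure \<Rightarrow> real set" where
  "measure_support M = {x. \<forall>\<epsilon>>0. emeasure M (ball x \<epsilon>) > 0}"

definition stieltjes :: "real measure \<Rightarrow> real \<Rightarrow> real" where
  "stieltjes M x = integral\<^sup>L M (\<lambda>t. 1 / (t - x))"

end

theory Submission imports Defs begin

lemma supp_AE:
  fixes \<mu> :: "real measure" and lstar :: real
  assumes mu_sets: "sets \<mu> = sets borel"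
    and mu_compact: "compact (measure_support \<mu>)"
    and lstar_def: "lstar = Sup (measure_support \<mu>)"
  shows "AE t in \<mu>. t \<le> lstar"
proof -
  define F where "F = {ball t r | t r. r > 0 \<and> emeasure \<mu> (ball t r) = 0}"
  have opF: "\<And>S. S \<in> F \<Longrightarrow> openin (top_of_set UNIV) S" unfolding F_def by auto
  obtain F' where F': "F' \<subseteq> F" "countable F'" "\<Union>F' = \<Union>F"
    using Lindelof_openin[OF opF] by blast
  have bdd: "bdd_above (measure_support \<mu>)"
    by (rule bounded_imp_bdd_above[OF compact_imp_bounded[OF mu_compact]])
  have sub: "{lstar<..} \<subseteq> \<Union>F"
  proof
    fix t assume "t \<in> {lstar<..}"
    hence "t \<notin> measure_support \<mu>" using cSup_upper[OF _ bdd] lstar_def by force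
    then obtain r where "r > 0" "\<not> emeasure \<mu> (ball t r) > 0"
      unfolding measure_support_def by auto
    hence "ball t r \<in> F" unfolding F_def by auto
    thus "t \<in> \<Union>F" using \<open>r > 0\<close> by (intro UnionI[of "ball t r"]) auto
  qed
  have "(\<Union>S\<in>F'. S) \<in> null_sets \<mu>"
  proof (rule null_sets_UN'[OF F'(2)])
    fix S assume "S \<in> F'"
    hence "S \<in> F" using F' by auto
    then obtain t r where "S = ball t r" "emeasure \<mu> (ball t r) = 0" unfolding F_def by auto
    thus "S \<in> null_sets \<mu>" using mu_sets by (auto simp: null_sets_def)
  qed
  moreover have "{x \<in> space \<mu>. \<not> x \<le> lstar} \<subseteq> (\<Union>S\<in>F'. S)"
    using sub F'(3) by auto
  ultimately show ?thesis by (rule AE_I')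
qed

lemma stieltjes_lb:
  fixes \<mu> :: "real measure" and lstar x :: real
  assumes mu_prob: "prob_space \<mu>" and AE: "AE t in \<mu>. t \<le> lstar" and x: "x > lstar"
  shows "stieltjes \<mu> x \<ge> - 1 / (x - lstar)"
proof (cases "integrable \<mu> (\<lambda>t. 1 / (t - x))")
  case True
  have "AE t in \<mu>. - 1 / (x - lstar) \<le> 1 / (t - x)"
    using AE
  proof (rule AE_mp, intro AE_I2 impI)
    fix t assume "t \<le> lstar"
    hence "x - t \<ge> x - lstar" "x - lstar > 0" using x by auto
    hence "1 / (x - t) \<le> 1 / (x - lstar)" by (intro divide_left_mono) auto
    moreover have "1 / (t - x) = - (1 / (x - t))" by (simp add: divide_simps)
    ultimately show "- 1 / (x - lstar) \<le> 1 / (t - x)" by simp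
  qed
  hence "integral\<^sup>L \<mu> (\<lambda>t. - 1 / (x - lstar)) \<le> integral\<^sup>L \<mu> (\<lambda>t. 1 / (t - x))"
    using True mu_prob by (intro integral_mono_AE) (auto simp: prob_space_def finite_measure.integrable_const)
  thus ?thesis using mu_prob unfolding stieltjes_def by (simp add: prob_space.prob_space)
next
  case False
  thus ?thesis using x unfolding stieltjes_def
    by (simp add: not_integrable_integral_eq)
qed

theorem lemma3p6:
  fixes \<gamma> :: real and p n :: nat
    and a \<omega> b \<pi> :: "nat \<Rightarrow> real"
    and \<mu> :: "real measure" and lstar :: real
    and e :: "real \<Rightarrow> real"
  assumes gamma_pos: "\<gamma> > 0"
    and a_pos: "\<forall>i\<in>{1..p}. a i > 0" and \<omega>_pos: "\<forall>i\<in>{1..p}. \<omega> i > 0"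
    and \<omega>_sum: "(\<Sum>i=1..p. \<omega> i) = 1"
    and b_pos: "\<forall>j\<in>{1..n}. b j > 0" and \<pi>_pos: "\<forall>j\<in>{1..n}. \<pi> j > 0"
    and \<pi>_sum: "(\<Sum>j=1..n. \<pi> j) = 1"
    and mu_prob: "prob_space \<mu>" and mu_sets: "sets \<mu> = sets borel"
    and mu_compact: "compact (measure_support \<mu>)"
    and mu_nonneg: "measure_support \<mu> \<subseteq> {0..}"
    and lstar_def: "lstar = Sup (measure_support \<mu>)"
    and lstar_pos: "lstar > 0"
    and e_cont: "continuous_on {lstar<..} e"
    and e_nopole: "\<forall>x>lstar. \<forall>j\<in>{1..n}. e x \<noteq> - 1 / (\<gamma> * b j)"
    and e_nores: "\<forall>x>lstar. \<forall>i\<in>{1..p}. a i * Gfun \<gamma> b \<pi> n (e x) \<noteq> x"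
    and master_s: "\<forall>x>lstar. stieltjes \<mu> x =
        (\<Sum>i=1..p. \<omega> i / (a i * Gfun \<gamma> b \<pi> n (e x) - x))"
    and master_e: "\<forall>x>lstar. e x =
        (\<Sum>i=1..p. a i * \<omega> i / (a i * Gfun \<gamma> b \<pi> n (e x) - x))"
  shows "\<forall>x>lstar. Gfun \<gamma> b \<pi> n (e x) / x < 1 / Max (a ` {1..p})"
proof -
  define g where "g t = Gfun \<gamma> b \<pi> n (e t)" for t
  define A where "A = Max (a ` {1..p})"
  have p1: "p \<ge> 1" using \<omega>_sum by (cases p) auto
  have Amem: "A \<in> a ` {1..p}" unfolding A_def using p1 by (intro Max_in) auto
  then obtain k where k: "k \<in> {1..p}" "a k = A" by auto
  have Apos: "A > 0" using k a_pos by auto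
  have AE: "AE t in \<mu>. t \<le> lstar" by (rule supp_AE[OF mu_sets mu_compact lstar_def])
  have den: "1 + \<gamma> * b j * e t \<noteq> 0" if "t > lstar" "j \<in> {1..n}" for t j
  proof
    assume "1 + \<gamma> * b j * e t = 0"
    moreover have "b j > 0" using b_pos that(2) by auto
    ultimately have "e t = - 1 / (\<gamma> * b j)" using gamma_pos by (simp add: field_simps)
    thus False using e_nopole that by auto
  qed
  have gcont: "continuous_on {lstar<..} g"
    unfolding g_def Gfun_def
    by (intro continuous_intros e_cont) (use den in auto)
  have key: "g y * e y \<ge> - lstar / (y - lstar)" if y: "y > lstar" for y
  proof -
    have d: "a i * g y - y \<noteq> 0" if "i \<in> {1..p}" for i using e_nores y that unfolding g_def by auto
    have "g y * e y - y * stieltjes \<mu> y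
        = (\<Sum>i=1..p. g y * (a i * \<omega> i / (a i * g y - y)) - y * (\<omega> i / (a i * g y - y)))"
    proof -
      have s1: "stieltjes \<mu> y = (\<Sum>i=1..p. \<omega> i / (a i * g y - y))"
        using master_s y unfolding g_def by auto
      have e1: "e y = (\<Sum>i=1..p. a i * \<omega> i / (a i * g y - y))"
        using master_e y unfolding g_def by auto
      show ?thesis unfolding sum_subtractf
        by (subst (1) e1, subst s1) (simp add: sum_distrib_left)
    qed
    also have "\<dots> = (\<Sum>i=1..p. \<omega> i)"
    proof (intro sum.cong refl)
      fix i assume i: "i \<in> {1..p}"
      have "g y * (a i * \<omega> i / (a i * g y - y)) - y * (\<omega> i / (a i * g y - y))
          = \<omega> i * ((a i * g y - y) / (a i * g y - y))" by (simp add: field_simps diff_divide_distrib)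
      also have "\<dots> = \<omega> i" using d[OF i] by simp
      finally show "g y * (a i * \<omega> i / (a i * g y - y)) - y * (\<omega> i / (a i * g y - y)) = \<omega> i" .
    qed
    finally have eq: "g y * e y = 1 + y * stieltjes \<mu> y" using \<omega>_sum by simp
    have "stieltjes \<mu> y \<ge> - 1 / (y - lstar)" by (rule stieltjes_lb[OF mu_prob AE y])
    hence "y * stieltjes \<mu> y \<ge> y * (- 1 / (y - lstar))"
      using y lstar_pos by (intro mult_left_mono) auto
    moreover have "1 + y * (- 1 / (y - lstar)) = - lstar / (y - lstar)"
      using y by (simp add: field_simps)
    ultimately show ?thesis using eq by linarith
  qed
  define B where "B = (\<Sum>j=1..n. b j * \<pi> j)"
  define Bm where "Bm = (\<Sum>j=1..n. b j)"
  have Bm_ge: "b j \<le> Bm" if "j \<in> {1..n}" for j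
    unfolding Bm_def using b_pos that by (intro member_le_sum) (auto intro: less_imp_le)
  have Bm_nn: "Bm \<ge> 0" unfolding Bm_def using b_pos by (intro sum_nonneg) (auto intro: less_imp_le)
  have B_nn: "B \<ge> 0" unfolding B_def using b_pos \<pi>_pos by (intro sum_nonneg) (auto intro: less_imp_le)
  have large: "A * g y < y" if y: "y \<ge> 2*lstar + 2*A*B + 4*\<gamma>*lstar*A*Bm + 1" for y
  proof (rule ccontr)
    assume "\<not> A * g y < y"
    hence Agy: "A * g y \<ge> y" by simp
    have n1: "2*A*B \<ge> 0" using Apos B_nn by simp
    have n2: "4*\<gamma>*lstar*A*Bm \<ge> 0" using Apos Bm_nn gamma_pos lstar_pos by simp
    have y1: "y \<ge> 1" and ylstar: "y > 2 * lstar" using y n1 n2 lstar_pos by linarith+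
    have gpos: "g y > 0"
    proof (rule ccontr)
      assume "\<not> g y > 0"
      hence "A * g y \<le> 0" using Apos by (simp add: mult_nonneg_nonpos)
      thus False using Agy y1 by linarith
    qed
    have gy: "g y \<ge> y / A" using Agy Apos by (simp add: field_simps)
    have yl: "y > lstar" using ylstar lstar_pos by simp
    define P where "P = (y - lstar) * g y"
    have eP: "e y * P \<ge> - lstar"
    proof -
      have "g y * e y * (y - lstar) \<ge> - lstar / (y - lstar) * (y - lstar)"
        using key[OF yl] yl by (intro mult_right_mono) auto
      moreover have "- lstar / (y - lstar) * (y - lstar) = - lstar" using yl by simp
      moreover have "g y * e y * (y - lstar) = e y * P" unfolding P_def by simp
      ultimately show ?thesis by simp
    qed
    have "y - lstar \<ge> y / 2" using ylstar by simp
    hence P_ge: "P \<ge> (y/2) * (y / A)" unfolding P_def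
      using gy y1 Apos by (intro mult_mono) auto
    have e_lb: "e y \<ge> - (2 * A * lstar) / y^2"
    proof (cases "e y \<ge> 0")
      case True
      have "2 * A * lstar / y^2 \<ge> 0" using Apos lstar_pos by simp
      thus ?thesis using True by linarith
    next
      case False
      have "e y * ((y/2) * (y / A)) \<ge> e y * P"
        using False P_ge by (intro mult_left_mono_neg) auto
      hence "e y * ((y/2) * (y / A)) \<ge> - lstar" using eP by linarith
      hence "e y * y^2 \<ge> - 2 * A * lstar" using Apos by (simp add: field_simps power2_eq_square)
      thus ?thesis using y1 by (simp add: field_simps)
    qed
    have "g y \<le> (\<Sum>j=1..n. 2 * (b j * \<pi> j))"
      unfolding g_def Gfun_def
    proof (intro sum_mono)
      fix j assume j: "j \<in> {1..n}"
      have bj: "b j > 0" "\<pi> j > 0" using j b_pos \<pi>_pos by auto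
      have "4 * \<gamma> * b j * A * lstar \<le> 4 * \<gamma> * Bm * A * lstar"
        using Bm_ge[OF j] gamma_pos Apos lstar_pos by (intro mult_right_mono mult_left_mono) auto
      also have "\<dots> = 4*\<gamma>*lstar*A*Bm" by simp
      also have "\<dots> \<le> y" using y n1 lstar_pos by linarith
      also have "y \<le> y^2" using y1 by (simp add: power2_eq_square)
      finally have c: "4 * \<gamma> * b j * A * lstar \<le> y^2" .
      have "\<gamma> * b j * e y \<ge> \<gamma> * b j * (- (2 * A * lstar) / y^2)"
        using e_lb gamma_pos bj by (intro mult_left_mono) auto
      moreover have "\<gamma> * b j * (- (2 * A * lstar) / y^2) \<ge> - 1/2"
        using c y1 by (simp add: field_simps)
      ultimately have dd: "1 + \<gamma> * b j * e y \<ge> 1/2" by linarith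
      have "b j * \<pi> j / (1 + \<gamma> * b j * e y) \<le> b j * \<pi> j / (1/2)"
        using dd bj by (intro divide_left_mono) auto
      thus "b j * \<pi> j / (1 + \<gamma> * b j * e y) \<le> 2 * (b j * \<pi> j)" by simp
    qed
    hence "g y \<le> 2 * B" unfolding B_def by (simp add: sum_distrib_left)
    hence "A * g y \<le> 2 * A * B" using Apos by simp
    moreover have "2 * A * B < y" using y n2 lstar_pos by linarith
    ultimately show False using Agy by linarith
  qed
  show ?thesis
  proof (intro allI impI)
    fix x assume x: "x > lstar"
    show "Gfun \<gamma> b \<pi> n (e x) / x < 1 / Max (a ` {1..p})"
    proof (rule ccontr)
      assume "\<not> ?thesis"
      hence "g x / x \<ge> 1 / A" unfolding g_def A_def by simp
      hence Agx: "A * g x \<ge> x" using x lstar_pos Apos by (simp add: field_simps)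
      define y where "y = \<bar>x\<bar> + 2*lstar + 2*A*B + 4*\<gamma>*lstar*A*Bm + 1"
      have "y \<ge> 2*lstar + 2*A*B + 4*\<gamma>*lstar*A*Bm + 1" unfolding y_def by simp
      hence Agy: "A * g y < y" by (rule large)
      have "2*A*B \<ge> 0" using Apos B_nn by simp
      moreover have "4*\<gamma>*lstar*A*Bm \<ge> 0" using Apos gamma_pos lstar_pos Bm_nn by simp
      ultimately have xy: "x \<le> y" unfolding y_def using lstar_pos by linarith
      have "continuous_on {x..y} (\<lambda>t. t - A * g t)"
        using x by (intro continuous_intros continuous_on_subset[OF gcont]) auto
      then obtain t where t: "x \<le> t" "t \<le> y" "t - A * g t = 0"
        using IVT'[of "\<lambda>t. t - A * g t" x 0 y] Agx Agy xy by auto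
      have "t > lstar" using x t by linarith
      hence "a k * g t \<noteq> t" using e_nores k unfolding g_def by blast
      thus False using t k by simp
    qed
  qed
qed
end
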